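(* Let $G=(V,E)$ be a surjective-only finite simple graph with $n$ nodes, $m$ edges and incidence matrix $A$, let $\lambda\in\mathbb{R}_{>0}^n$ be such that $(G,\lambda)$ is stabilizable, let $d=m-n$, and let $\Pi_{\ge0}=\{\mu\in\mathbb{R}_{\ge0}^m:A\mu=\lambda\}$ (a $d$-dimensional polytope). For a vertex $\mu$ of $\Pi_{\ge0}$, the following are equivalent: (i) $\mu$ is bijective; (ii) $\mu$ belongs to exactly $d$ facets of $\Pi_{\ge0}$ and none of the inequalities that are tight for $\mu$ is redundant. In particular, all vertices of $\Pi_{\ge0}$ are bijective if and only if the matching problem $(G,\lambda)$ is essential and the polytope $\Pi_{\ge0}$ is simple.
   Context: Incidence matrix: $a_{i,k}=1$ iff node $i$ is an endpoint of edge $k$. A graph is bijective if every connected component contains exactly one cycle and this cycle is odd; surjective-only means every connected component is non-bipartite but the graph is not a disjoint union of trees and odd-unicyclic graphs. A vertex $\mu$ of $\Pi_{\ge0}$ is called bijective if its support graph $(V,\{k\in E:\mu_k>0\})$ is bijective. $\Pi_{\ge0}$ is defined by the $m$ inequalities $\mu_k\ge0$, $k\in E$, within the affine space $\{A\mu=\lambda\}$. A face of a $d$-dimensional convex polytope is a non-empty intersection with a hyperplane such that the polytope lies in one of the two closed half-spaces; a facet is a face of dimension $d-1$; a vertex is a face of dimension $0$. The inequality $\mu_k\ge0$ is tight if some $\mu\in\Pi_{\ge0}$ has $\mu_k=0$ (tight for $\mu$ if $\mu_k=0$); it is redundant if $\Pi_{\ge0}=\{\mu\in\mathbb{R}^m:A\mu=\lambda,\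 \mu_\ell\ge0\ \forall\ell\in E\setminus\{k\}\}$, irredundant otherwise. $(G,\lambda)$ is essential if all tight inequalities are irredundant. $\Pi_{\ge0}$ is simple if every vertex belongs to exactly $d$ facets. Stabilizability of $(G,\lambda)$ is equivalent (for surjective $G$) to existence of $\mu\in\mathbb{R}_{>0}^m$ with $A\mu=\lambda$. *)

theory Defs
  imports "HOL-Analysis.Analysis"
begin

text \<open>A finite simple graph: nodes are the elements of a finite type 'v, edges the
elements of a finite type 'e; each edge k has a two-element set of endpoints ends k,
and distinct edges have distinct endpoint sets (no multi-edges).\<close>

definition simple_graph :: "('e::finite \<Rightarrow> 'v::finite set) \<Rightarrow> bool" where
  "simple_graph ends \<longleftrightarrow> inj ends \<and> (\<forall>k. card (ends k) = 2)"

definition incidence :: "('e::finite \<Rightarrow> 'v::finite set) \<Rightarrow> real ^ 'e ^ 'v" where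
  "incidence ends = (\<chi> i k. if i \<in> ends k then 1 else 0)"

definition adj :: "('e \<Rightarrow> 'v set) \<Rightarrow> 'e set \<Rightarrow> 'v \<Rightarrow> 'v \<Rightarrow> bool" where
  "adj ends F u w \<longleftrightarrow> (\<exists>k\<in>F. ends k = {u, w})"

definition component :: "('e \<Rightarrow> 'v set) \<Rightarrow> 'e set \<Rightarrow> 'v \<Rightarrow> 'v set" where
  "component ends F v = {u. (adj ends F)\<^sup>*\<^sup>* v u}"

definition is_cycle :: "('e \<Rightarrow> 'v set) \<Rightarrow> 'e set \<Rightarrow> 'e set \<Rightarrow> bool" where
  "is_cycle ends F C \<longleftrightarrow> (\<exists>vs. length vs \<ge> 3 \<and> distinct vs \<and>
      (\<forall>i<length vs. adj ends F (vs ! i) (vs ! (Suc i mod length vs))) \<and>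
      C = {k\<in>F. \<exists>i<length vs. ends k = {vs ! i, vs ! (Suc i mod length vs)}})"

definition cycle_in_comp :: "('e \<Rightarrow> 'v set) \<Rightarrow> 'e set \<Rightarrow> 'e set \<Rightarrow> 'v \<Rightarrow> bool" where
  "cycle_in_comp ends F C v \<longleftrightarrow> is_cycle ends F C \<and> (\<forall>k\<in>C. ends k \<subseteq> component ends F v)"

definition odd_unicyclic_comp :: "('e \<Rightarrow> 'v set) \<Rightarrow> 'e set \<Rightarrow> 'v \<Rightarrow> bool" where
  "odd_unicyclic_comp ends F v \<longleftrightarrow>
     (\<exists>C. cycle_in_comp ends F C v \<and> odd (card C) \<and>
          (\<forall>C'. cycle_in_comp ends F C' v \<longrightarrow> C' = C))"

definition tree_comp :: "('e \<Rightarrow> 'v set) \<Rightarrow> 'e set \<Rightarrow> 'v \<Rightarrow> bool" where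
  "tree_comp ends F v \<longleftrightarrow> \<not> (\<exists>C. cycle_in_comp ends F C v)"

definition bipartite_comp :: "('e \<Rightarrow> 'v set) \<Rightarrow> 'e set \<Rightarrow> 'v \<Rightarrow> bool" where
  "bipartite_comp ends F v \<longleftrightarrow>
     (\<exists>c :: 'v \<Rightarrow> bool. \<forall>u w. u \<in> component ends F v \<longrightarrow> adj ends F u w \<longrightarrow> c u \<noteq> c w)"

definition bijective_graph :: "('e \<Rightarrow> 'v set) \<Rightarrow> 'e set \<Rightarrow> bool" where
  "bijective_graph ends F \<longleftrightarrow> (\<forall>v. odd_unicyclic_comp ends F v)"

definition surjective_only :: "('e \<Rightarrow> 'v set) \<Rightarrow> 'e set \<Rightarrow> bool" where
  "surjective_only ends F \<longleftrightarrow> (\<forall>v. \<not> bipartite_comp ends F v) \<and>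
     \<not> (\<forall>v. tree_comp ends F v \<or> odd_unicyclic_comp ends F v)"

definition Pi_ge0 :: "('e::finite \<Rightarrow> 'v::finite set) \<Rightarrow> real ^ 'v \<Rightarrow> (real ^ 'e) set" where
  "Pi_ge0 ends lam = {\<mu>. (\<forall>k. \<mu> $ k \<ge> 0) \<and> incidence ends *v \<mu> = lam}"

definition is_vertex :: "(real ^ 'e::finite) set \<Rightarrow> real ^ 'e \<Rightarrow> bool" where
  "is_vertex P \<mu> \<longleftrightarrow> {\<mu>} face_of P"

definition support :: "real ^ 'e::finite \<Rightarrow> 'e set" where
  "support \<mu> = {k. \<mu> $ k > 0}"

definition bijective_vertex :: "('e::finite \<Rightarrow> 'v::finite set) \<Rightarrow> real ^ 'e \<Rightarrow> bool" where
  "bijective_vertex ends \<mu> \<longleftrightarrow> bijective_graph ends (support \<mu>)"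

definition tight :: "('e::finite \<Rightarrow> 'v::finite set) \<Rightarrow> real ^ 'v \<Rightarrow> 'e \<Rightarrow> bool" where
  "tight ends lam k \<longleftrightarrow> (\<exists>\<mu>\<in>Pi_ge0 ends lam. \<mu> $ k = 0)"

definition redundant :: "('e::finite \<Rightarrow> 'v::finite set) \<Rightarrow> real ^ 'v \<Rightarrow> 'e \<Rightarrow> bool" where
  "redundant ends lam k \<longleftrightarrow>
     Pi_ge0 ends lam = {\<mu>. incidence ends *v \<mu> = lam \<and> (\<forall>l. l \<noteq> k \<longrightarrow> \<mu> $ l \<ge> 0)}"

definition essential :: "('e::finite \<Rightarrow> 'v::finite set) \<Rightarrow> real ^ 'v \<Rightarrow> bool" where
  "essential ends lam \<longleftrightarrow> (\<forall>k. tight ends lam k \<longrightarrow> \<not> redundant ends lam k)"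

definition facets_through :: "(real ^ 'e::finite) set \<Rightarrow> real ^ 'e \<Rightarrow> (real ^ 'e) set set" where
  "facets_through P \<mu> = {F. F facet_of P \<and> \<mu> \<in> F}"

definition simple_polytope :: "(real ^ 'e::finite) set \<Rightarrow> int \<Rightarrow> bool" where
  "simple_polytope P d \<longleftrightarrow> (\<forall>\<mu>. is_vertex P \<mu> \<longrightarrow> int (card (facets_through P \<mu>)) = d)"

end

theory Submission
  imports Defs
begin

definition cw :: "('a \<Rightarrow> 'a \<Rightarrow> bool) \<Rightarrow> 'a list \<Rightarrow> bool" where
  "cw R vs \<longleftrightarrow> vs \<noteq> [] \<and> (\<forall>i<length vs. R (vs!i) (vs!(Suc i mod length vs)))"

lemma cw_zero:
  fixes y :: "'a \<Rightarrow> real"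
  assumes R: "\<And>u w. R u w \<Longrightarrow> y u + y w = 0" and c: "cw R vs" and o: "odd (length vs)"
  shows "y (vs!0) = 0"
proof -
  let ?L = "length vs"
  have L: "?L > 0" using c by (simp add: cw_def)
  have step: "\<And>i. i < ?L \<Longrightarrow> R (vs!i) (vs!(Suc i mod ?L))" using c by (simp add: cw_def)
  have *: "\<And>i. i < ?L \<Longrightarrow> y (vs!i) = (-1)^i * y (vs!0)"
  proof -
    fix i show "i < ?L \<Longrightarrow> y (vs!i) = (-1)^i * y (vs!0)"
    proof (induction i)
      case 0 then show ?case by simp
    next
      case (Suc i)
      then have "R (vs!i) (vs!(Suc i))" using step[of i] by simp
      then have "y (vs!i) + y (vs!Suc i) = 0" by (rule R)
      then show ?case using Suc by simp
    qed
  qed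
  have "R (vs!(?L - 1)) (vs!0)" using step[of "?L - 1"] L by simp
  then have "y (vs!(?L - 1)) + y (vs!0) = 0" by (rule R)
  moreover have "even (?L - 1)" using o L by simp
  ultimately show ?thesis using *[of "?L - 1"] L by simp
qed

lemma rtranclp_zero:
  fixes y :: "'a \<Rightarrow> real"
  assumes "R\<^sup>*\<^sup>* a b" and R: "\<And>u w. R u w \<Longrightarrow> y u + y w = 0"
  shows "y a = 0 \<longleftrightarrow> y b = 0"
  using assms(1)
proof (induction rule: rtranclp_induct)
  case base then show ?case by simp
next
  case (step b c) then show ?case using R[of b c] by auto
qed

lemma relpowp_list:
  assumes "(R ^^ n) a b"
  shows "\<exists>xs. length xs = Suc n \<and> xs!0 = a \<and> xs!n = b \<and> (\<forall>i<n. R (xs!i) (xs!Suc i))"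
  using assms
proof (induction n arbitrary: b)
  case 0 then show ?case by (intro exI[of _ "[a]"]) auto
next
  case (Suc n)
  then obtain c where c: "(R ^^ n) a c" "R c b" by auto
  from Suc.IH[OF c(1)] obtain xs where xs: "length xs = Suc n" "xs!0 = a" "xs!n = c"
    "\<forall>i<n. R (xs!i) (xs!Suc i)" by blast
  show ?case
    apply (intro exI[of _ "xs @ [b]"])
    using xs c(2) by (auto simp: nth_append less_Suc_eq)
qed

lemma relpowp_sym:
  assumes "(R ^^ n) a b" and S: "\<And>u w. R u w \<Longrightarrow> R w u"
  shows "(R ^^ n) b a"
  using assms(1)
proof (induction n arbitrary: b)
  case 0 then show ?case by simp
next
  case (Suc n)
  then obtain c where c: "(R ^^ n) a c" "R c b" by auto
  have "(R ^^ n) c a" using Suc.IH c(1) by blast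
  then show ?case using S[OF c(2)] by (metis relpowp_Suc_I2)
qed

lemma cw_rotate:
  assumes "cw R vs" shows "cw R (rotate n vs)"
proof -
  let ?L = "length vs"
  have L: "?L > 0" using assms by (simp add: cw_def)
  have "R (rotate n vs ! i) (rotate n vs ! (Suc i mod ?L))" if "i < ?L" for i
  proof -
    have "R (vs!((i + n) mod ?L)) (vs!(Suc ((i + n) mod ?L) mod ?L))"
      using assms L by (simp add: cw_def)
    moreover have "Suc ((i + n) mod ?L) mod ?L = (Suc i mod ?L + n) mod ?L"
      by (metis add_Suc mod_Suc_eq mod_add_left_eq)
    ultimately show ?thesis using that L by (simp add: nth_rotate add.commute)
  qed
  then show ?thesis using assms by (simp add: cw_def)
qed

lemma cw_take:
  assumes "cw R us" "0 < k" "k < length us" "us!k = us!0"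
  shows "cw R (take k us)"
proof -
  let ?L = "length us"
  have st: "\<And>i. i < ?L \<Longrightarrow> R (us!i) (us!(Suc i mod ?L))" using assms(1) by (simp add: cw_def)
  have "R (take k us ! t) (take k us ! (Suc t mod k))" if t: "t < k" for t
  proof (cases "Suc t < k")
    case True
    then show ?thesis using st[of t] assms(3) t by simp
  next
    case False
    then have "t = k - 1" using t by simp
    then show ?thesis using st[of t] assms t by simp
  qed
  then show ?thesis using assms by (simp add: cw_def min_def)
qed

lemma cw_drop:
  assumes "cw R us" "0 < k" "k < length us" "us!k = us!0"
  shows "cw R (drop k us)"
proof -
  let ?L = "length us"
  have st: "\<And>i. i < ?L \<Longrightarrow> R (us!i) (us!(Suc i mod ?L))" using assms(1) by (simp add: cw_def)
  have "R (drop k us ! t) (drop k us ! (Suc t mod (?L - k)))" if t: "t < ?L - k" for t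
  proof (cases "Suc t < ?L - k")
    case True
    then show ?thesis using st[of "k + t"] assms(3) t by simp
  next
    case False
    then have "t = ?L - k - 1" using t by simp
    then have kt: "k + t = ?L - 1" using assms(3) by simp
    have "Suc t = ?L - k" using \<open>t = ?L - k - 1\<close> assms(3) by simp
    then have "Suc t mod (?L - k) = 0" by simp
    moreover have "Suc (?L - 1) = ?L" using assms(3) by simp
    then have "Suc (?L - 1) mod ?L = 0" by simp
    ultimately show ?thesis using st[of "k + t"] assms t kt by simp
  qed
  then show ?thesis using assms by (simp add: cw_def)
qed

lemma cw_odd_distinct:
  assumes "cw R vs" "odd (length vs)"
  shows "\<exists>ws. cw R ws \<and> odd (length ws) \<and> distinct ws \<and> set ws \<subseteq> set vs"
  using assms
proof (induction "length vs" arbitrary: vs rule: less_induct)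
  case less
  show ?case
  proof (cases "distinct vs")
    case True then show ?thesis using less.prems by blast
  next
    case False
    let ?L = "length vs"
    from False obtain i j where ij: "i < j" "j < ?L" "vs!i = vs!j"
      by (metis distinct_conv_nth linorder_neqE_nat)
    define us where "us = rotate i vs"
    define k where "k = j - i"
    have cu: "cw R us" using less.prems(1) by (simp add: us_def cw_rotate)
    have lu: "length us = ?L" by (simp add: us_def)
    have k: "0 < k" "k < length us" using ij by (auto simp: k_def lu)
    have vne: "0 < length vs" using ij(2) by linarith
    have u0: "us!0 = vs!i" using ij nth_rotate[OF vne, of i] by (simp add: us_def)
    have uk: "us!k = vs!j" using ij by (simp add: us_def nth_rotate k_def)
    have ukk: "us!k = us!0" using u0 uk ij by simp
    have c1: "cw R (take k us)" by (rule cw_take[OF cu k ukk])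
    have c2: "cw R (drop k us)" by (rule cw_drop[OF cu k ukk])
    have s1: "set (take k us) \<subseteq> set vs" using set_take_subset[of k us] by (simp add: us_def)
    have s2: "set (drop k us) \<subseteq> set vs" using set_drop_subset[of k us] by (simp add: us_def)
    have l1: "length (take k us) < ?L" "length (drop k us) < ?L" using k lu by auto
    have "odd (length (take k us)) \<or> odd (length (drop k us))"
      using less.prems(2) k lu by auto
    then show ?thesis
    proof
      assume "odd (length (take k us))"
      with less.hyps[OF l1(1) c1] s1 show ?thesis by blast
    next
      assume "odd (length (drop k us))"
      with less.hyps[OF l1(2) c2] s2 show ?thesis by blast
    qed
  qed
qed

abbreviation col :: "('e::finite \<Rightarrow> 'v::finite set) \<Rightarrow> 'e \<Rightarrow> real ^ 'v" where
  "col ends k \<equiv> column k (incidence ends)"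

lemma col_nth: "col ends k $ i = (if i \<in> ends k then 1 else 0)"
  by (simp add: column_def incidence_def)

lemma col_inj: "simple_graph ends \<Longrightarrow> col ends k = col ends l \<Longrightarrow> k = l"
proof -
  assume g: "simple_graph ends" and e: "col ends k = col ends l"
  have "ends k = ends l"
  proof
    show "ends k \<subseteq> ends l" using e by (auto simp: vec_eq_iff col_nth split: if_splits)
    show "ends l \<subseteq> ends k" using e by (auto simp: vec_eq_iff col_nth split: if_splits)
  qed
  then show ?thesis using g by (auto simp: simple_graph_def inj_def)
qed

lemma inj_col: "simple_graph ends \<Longrightarrow> inj_on (col ends) T"
  by (meson col_inj inj_onI)

lemma ends2: "simple_graph ends \<Longrightarrow> \<exists>u w. ends k = {u, w} \<and> u \<noteq> w"
  by (simp add: simple_graph_def card_2_iff)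

lemma inner_col:
  assumes "ends k = {u, w}" "u \<noteq> w"
  shows "y \<bullet> col ends k = y $ u + y $ w"
proof -
  have "y \<bullet> col ends k = (\<Sum>i\<in>UNIV. if i \<in> ends k then y $ i else 0)"
    by (simp add: inner_vec_def col_nth if_distrib cong: if_cong)
  also have "\<dots> = (\<Sum>i\<in>ends k. y $ i)"
    by (simp add: sum.If_cases)
  also have "\<dots> = y $ u + y $ w" using assms by simp
  finally show ?thesis .
qed

lemma adj_sym: "adj ends T u w \<Longrightarrow> adj ends T w u"
  by (auto simp: adj_def insert_commute)

lemma adj_irrefl: "simple_graph ends \<Longrightarrow> \<not> adj ends T u u"
proof
  assume g: "simple_graph ends" and "adj ends T u u"
  then obtain k where "ends k = {u}" by (auto simp: adj_def)
  then have "card (ends k) = 1" by simp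
  with g show False by (simp add: simple_graph_def)
qed

lemma adj_rtranclp_sym: "(adj ends T)\<^sup>*\<^sup>* u w \<Longrightarrow> (adj ends T)\<^sup>*\<^sup>* w u"
proof (induction rule: rtranclp_induct)
  case base then show ?case by simp
next
  case (step b c) then show ?case using adj_sym[of ends T b c]
    by (meson converse_rtranclp_into_rtranclp)
qed

lemma span_good:
  fixes ends :: "'e::finite \<Rightarrow> 'v::finite set"
  assumes g: "simple_graph ends"
    and good: "\<forall>x. \<exists>ws. cw (adj ends T) ws \<and> odd (length ws) \<and> (adj ends T)\<^sup>*\<^sup>* x (ws!0)"
  shows "span (col ends ` T) = UNIV"
proof (rule ccontr)
  assume "span (col ends ` T) \<noteq> UNIV"
  then obtain y :: "real^'v" where y: "y \<noteq> 0" "\<forall>x\<in>span (col ends ` T). y \<bullet> x = 0"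
    using span_not_UNIV_orthogonal by blast
  have R: "(\<lambda>v. y $ v) u + (\<lambda>v. y $ v) w = 0" if "adj ends T u w" for u w
  proof -
    from that obtain k where k: "k \<in> T" "ends k = {u, w}" by (auto simp: adj_def)
    have "u \<noteq> w" using adj_irrefl[OF g] that by blast
    moreover have "y \<bullet> col ends k = 0" using y(2) k(1) by (simp add: span_base)
    ultimately show ?thesis using inner_col[of ends k u w y] k(2) by simp
  qed
  have "y $ x = 0" for x
  proof -
    from good obtain ws where ws: "cw (adj ends T) ws" "odd (length ws)" "(adj ends T)\<^sup>*\<^sup>* x (ws!0)"
      by blast
    have "y $ (ws!0) = 0" using cw_zero[of "adj ends T" "\<lambda>v. y $ v", OF R ws(1) ws(2)] by simp
    then show ?thesis using rtranclp_zero[of "adj ends T" x "ws!0" "\<lambda>v. y $ v", OF ws(3) R] by simp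
  qed
  then have "y = 0" by (simp add: vec_eq_iff)
  with y(1) show False by simp
qed

lemma closed_walk_cw:
  assumes "(R ^^ N) v v" "0 < N"
  shows "\<exists>vs. cw R vs \<and> length vs = N \<and> (\<forall>x\<in>set vs. R\<^sup>*\<^sup>* v x)"
proof -
  obtain xs where xs: "length xs = Suc N" "xs!0 = v" "xs!N = v" "\<forall>i<N. R (xs!i) (xs!Suc i)"
    using relpowp_list[OF assms(1)] by blast
  have reach: "i \<le> N \<Longrightarrow> R\<^sup>*\<^sup>* v (xs!i)" for i
  proof (induction i)
    case 0 then show ?case using xs by simp
  next
    case (Suc i) then show ?case using xs(4) by (meson Suc_le_lessD less_imp_le_nat rtranclp.simps)
  qed
  let ?vs = "take N xs"
  have "R (?vs!i) (?vs!(Suc i mod N))" if "i < N" for i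
  proof (cases "Suc i < N")
    case True then show ?thesis using xs that by simp
  next
    case False
    then have "Suc i = N" using that by simp
    then show ?thesis using xs that assms(2) by (metis mod_self nth_take)
  qed
  then have "cw R ?vs" using assms(2) xs by (auto simp: cw_def)
  moreover have "\<forall>x\<in>set ?vs. R\<^sup>*\<^sup>* v x"
    using reach xs by (auto simp: in_set_conv_nth)
  ultimately show ?thesis using xs by auto
qed

lemma relpowp_join:
  assumes "(R ^^ a) x y" "R y z" "(R ^^ b) z w"
  shows "(R ^^ (a + 1 + b)) x w"
proof -
  have "(R ^^ (a + 1)) x z" using assms(1,2) by auto
  then show ?thesis using assms(3) relpowp_add[of "a+1" b R] by auto
qed

lemma odd_walk_exists:
  fixes ends :: "'e::finite \<Rightarrow> 'v::finite set"
  assumes g: "simple_graph ends"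
    and sp: "span (col ends ` T) = UNIV"
  shows "\<exists>ws. cw (adj ends T) ws \<and> odd (length ws) \<and> distinct ws \<and> set ws \<subseteq> component ends T v"
proof -
  let ?R = "adj ends T"
  have "\<exists>N. odd N \<and> (?R ^^ N) v v"
  proof (rule ccontr)
    assume no: "\<not> (\<exists>N. odd N \<and> (?R ^^ N) v v)"
    define c where "c w \<longleftrightarrow> (\<exists>n. even n \<and> (?R ^^ n) v w)" for w
    define y :: "real^'v" where
      "y = (\<chi> w. if w \<in> component ends T v then (if c w then 1 else -1) else 0)"
    have key: "c u \<noteq> c w" if u: "u \<in> component ends T v" and a: "?R u w" for u w
    proof
      assume cuw: "c u = c w"
      from u obtain n1 where n1: "(?R ^^ n1) v u" by (auto simp: component_def rtranclp_power)
      have "?R\<^sup>*\<^sup>* v w" using u a by (auto simp: component_def)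
      then obtain n2 where n2: "(?R ^^ n2) v w" by (auto simp: rtranclp_power)
      have n2': "(?R ^^ n2) w v" using relpowp_sym[OF n2] adj_sym by metis
      have "(?R ^^ (n1 + 1 + n2)) v v"
        using relpowp_join[OF n1 a n2'] .
      moreover have "odd (n1 + 1 + n2)"
      proof (cases "c u")
        case True
        then obtain m1 where "even m1" "(?R ^^ m1) v u" by (auto simp: c_def)
        from True cuw obtain m2 where "even m2" "(?R ^^ m2) v w" by (auto simp: c_def)
        have "(?R ^^ m2) w v" using relpowp_sym[OF \<open>(?R ^^ m2) v w\<close>] adj_sym by metis
        then have "(?R ^^ (m1 + 1 + m2)) v v"
          using relpowp_join[OF \<open>(?R ^^ m1) v u\<close> a] by blast
        moreover have "odd (m1 + 1 + m2)" using \<open>even m1\<close> \<open>even m2\<close> by simp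
        ultimately show ?thesis using no by blast
      next
        case False
        then have "odd n1" using n1 by (auto simp: c_def)
        moreover have "odd n2" using False cuw n2 by (auto simp: c_def)
        ultimately show ?thesis by simp
      qed
      ultimately show False using no by blast
    qed
    have "y \<bullet> x = 0" if "x \<in> col ends ` T" for x
    proof -
      from that obtain k where k: "k \<in> T" "x = col ends k" by blast
      obtain u w where uw: "ends k = {u, w}" "u \<noteq> w" using ends2[OF g] by blast
      have a: "?R u w" "?R w u" using k uw by (auto simp: adj_def insert_commute)
      have "y $ u + y $ w = 0"
      proof (cases "u \<in> component ends T v")
        case True
        then have "w \<in> component ends T v" using a by (auto simp: component_def)
        then show ?thesis using True key[OF True a(1)] by (auto simp: y_def)
      next
        case False
        then have "w \<notin> component ends T v" using a
          by (auto simp: component_def) (meson rtranclp.rtrancl_into_rtrancl)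
        then show ?thesis using False by (simp add: y_def)
      qed
      then show ?thesis using inner_col[of ends k u w y] uw k by simp
    qed
    then have "y \<bullet> x = 0" for x
      using orthogonal_to_span[of x "col ends ` T" y] sp by (auto simp: orthogonal_def)
    then have y0: "y = 0" by (metis inner_eq_zero_iff)
    have "v \<in> component ends T v" by (simp add: component_def)
    moreover have "c v" unfolding c_def by (rule exI[of _ 0]) simp
    ultimately have "y $ v = 1" by (simp add: y_def)
    with y0 show False by simp
  qed
  then obtain N where N: "odd N" "(?R ^^ N) v v" by blast
  then have "0 < N" by (cases N) auto
  from closed_walk_cw[OF N(2) this] obtain vs where
    vs: "cw ?R vs" "length vs = N" "\<forall>x\<in>set vs. ?R\<^sup>*\<^sup>* v x" by blast
  from cw_odd_distinct[OF vs(1)] vs N obtain ws where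
    ws: "cw ?R ws" "odd (length ws)" "distinct ws" "set ws \<subseteq> set vs" by auto
  have "set ws \<subseteq> component ends T v" using ws(4) vs(3) by (auto simp: component_def)
  then show ?thesis using ws by blast
qed

lemma mod_pair_arith:
  fixes i j L :: nat
  assumes iL: "i < L" and jL: "j < L" and L3: "3 \<le> L" and ei: "i = Suc j mod L" and ej: "j = Suc i mod L"
  shows False
proof (cases "Suc j < L")
  case True
  then have i: "i = Suc j" using ei by simp
  show False
  proof (cases "Suc i < L")
    case True then have "j = Suc i" using ej by simp
    then show False using i by simp
  next
    case False
    then have "Suc i = L" using iL by simp
    then have "j = 0" using ej by simp
    then show False using \<open>Suc i = L\<close> i L3 by simp
  qed
next
  case False
  then have "Suc j = L" using jL by simp
  then have i0: "i = 0" using ei by simp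
  have "Suc 0 < L" using L3 by simp
  then have "j = 1" using ej i0 by simp
  then show False using \<open>Suc j = L\<close> L3 by simp
qed

lemma cycle_struct:
  fixes ends :: "'e::finite \<Rightarrow> 'v::finite set"
  assumes g: "simple_graph ends" and d: "distinct vs" and l: "3 \<le> length vs"
    and a: "\<forall>i<length vs. adj ends T (vs!i) (vs!(Suc i mod length vs))"
  shows "\<exists>h. (\<forall>i<length vs. h i \<in> T \<and> ends (h i) = {vs!i, vs!(Suc i mod length vs)}) \<and>
     inj_on h {..<length vs} \<and>
     {k\<in>T. \<exists>i<length vs. ends k = {vs ! i, vs ! (Suc i mod length vs)}} = h ` {..<length vs}"
proof -
  let ?L = "length vs"
  define h where "h i = (SOME k. k \<in> T \<and> ends k = {vs!i, vs!(Suc i mod ?L)})" for i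
  have h: "h i \<in> T \<and> ends (h i) = {vs!i, vs!(Suc i mod ?L)}" if "i < ?L" for i
  proof -
    have "\<exists>k. k \<in> T \<and> ends k = {vs!i, vs!(Suc i mod ?L)}" using a that by (auto simp: adj_def)
    then show ?thesis unfolding h_def by (rule someI_ex)
  qed
  have pair: "i = j" if "i < ?L" "j < ?L"
    "{vs!i, vs!(Suc i mod ?L)} = {vs!j, vs!(Suc j mod ?L)}" for i j
  proof -
    have L0: "0 < ?L" using l by linarith
    have si: "Suc i mod ?L < ?L" "Suc j mod ?L < ?L" using L0 by (rule mod_less_divisor)+
    from that(3) consider "vs!i = vs!j" | "vs!i = vs!(Suc j mod ?L)" "vs!(Suc i mod ?L) = vs!j"
      by (auto simp: doubleton_eq_iff)
    then show ?thesis
    proof cases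
      case 1 then show ?thesis using d that by (simp add: nth_eq_iff_index_eq)
    next
      case 2
      then have "i = Suc j mod ?L" "Suc i mod ?L = j"
        using d that si by (simp_all add: nth_eq_iff_index_eq)
      then have False using mod_pair_arith[of i ?L j] that(1,2) l by metis
      then show ?thesis ..
    qed
  qed
  have inj: "inj_on h {..<?L}"
  proof (rule inj_onI)
    fix i j assume "i \<in> {..<?L}" "j \<in> {..<?L}" "h i = h j"
    then show "i = j" using h pair by (metis lessThan_iff)
  qed
  have eq: "{k\<in>T. \<exists>i<?L. ends k = {vs ! i, vs ! (Suc i mod ?L)}} = h ` {..<?L}"
  proof
    show "{k\<in>T. \<exists>i<?L. ends k = {vs ! i, vs ! (Suc i mod ?L)}} \<subseteq> h ` {..<?L}"
    proof
      fix k assume "k \<in> {k\<in>T. \<exists>i<?L. ends k = {vs ! i, vs ! (Suc i mod ?L)}}"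
      then obtain i where i: "i < ?L" "ends k = {vs ! i, vs ! (Suc i mod ?L)}" by blast
      then have "ends k = ends (h i)" using h by simp
      then have "k = h i" using g by (simp add: simple_graph_def inj_def)
      then show "k \<in> h ` {..<?L}" using i by blast
    qed
    show "h ` {..<?L} \<subseteq> {k\<in>T. \<exists>i<?L. ends k = {vs ! i, vs ! (Suc i mod ?L)}}"
      using h by auto
  qed
  show ?thesis using h inj eq by blast
qed

lemma is_cycle_card:
  fixes ends :: "'e::finite \<Rightarrow> 'v::finite set"
  assumes g: "simple_graph ends" and d: "distinct vs" and l: "3 \<le> length vs"
    and a: "\<forall>i<length vs. adj ends T (vs!i) (vs!(Suc i mod length vs))"
  shows "card {k\<in>T. \<exists>i<length vs. ends k = {vs ! i, vs ! (Suc i mod length vs)}} = length vs"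
proof -
  from cycle_struct[OF assms] obtain h where
    "inj_on h {..<length vs}"
    "{k\<in>T. \<exists>i<length vs. ends k = {vs ! i, vs ! (Suc i mod length vs)}} = h ` {..<length vs}"
    by blast
  then show ?thesis by (simp add: card_image)
qed

lemma col_pair:
  assumes "ends k = {a, b}" "a \<noteq> b"
  shows "col ends k = axis a 1 + axis b (1::real)"
  using assms by (auto simp: vec_eq_iff col_nth axis_def)

lemma alt_sum_zero:
  fixes e :: "'a \<Rightarrow> real^'v" and vs :: "'a list"
  assumes "length vs = Suc n" "odd n"
  shows "(\<Sum>i<Suc n. (-1)^i *\<^sub>R (e (vs!i) + e (vs!(Suc i mod Suc n)))) = 0"
proof -
  have A: "(\<Sum>i<Suc n. (-1::real)^i *\<^sub>R e (vs!(Suc i mod Suc n))) =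
        (\<Sum>i<n. (-1)^i *\<^sub>R e (vs!(Suc i))) + (-1)^n *\<^sub>R e (vs!0)"
  proof -
    have "(\<Sum>i<n. (-1::real)^i *\<^sub>R e (vs!(Suc i mod Suc n))) = (\<Sum>i<n. (-1)^i *\<^sub>R e (vs!(Suc i)))"
      by (rule sum.cong) auto
    then show ?thesis by simp
  qed
  have B: "(\<Sum>i<Suc n. (-1::real)^i *\<^sub>R e (vs!i)) =
        e (vs!0) + (\<Sum>i<n. (-1)^(Suc i) *\<^sub>R e (vs!(Suc i)))"
    by (subst sum.lessThan_Suc_shift) simp
  have C: "(\<Sum>i<n. (-1::real)^(Suc i) *\<^sub>R e (vs!(Suc i))) = - (\<Sum>i<n. (-1)^i *\<^sub>R e (vs!(Suc i)))"
    by (simp add: sum_negf[symmetric])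
  have "(\<Sum>i<Suc n. (-1)^i *\<^sub>R (e (vs!i) + e (vs!(Suc i mod Suc n)))) =
     (\<Sum>i<Suc n. (-1::real)^i *\<^sub>R e (vs!i)) + (\<Sum>i<Suc n. (-1::real)^i *\<^sub>R e (vs!(Suc i mod Suc n)))"
    by (simp add: scaleR_add_right sum.distrib)
  also have "\<dots> = 0" using A B C assms(2) by simp
  finally show ?thesis .
qed

lemma cycle_odd:
  fixes ends :: "'e::finite \<Rightarrow> 'v::finite set"
  assumes g: "simple_graph ends" and ind: "independent (col ends ` T)"
    and c: "is_cycle ends T C"
  shows "odd (card C)"
proof -
  from c obtain vs where vs: "3 \<le> length vs" "distinct vs"
    "\<forall>i<length vs. adj ends T (vs!i) (vs!(Suc i mod length vs))"
    "C = {k\<in>T. \<exists>i<length vs. ends k = {vs ! i, vs ! (Suc i mod length vs)}}"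
    by (auto simp: is_cycle_def)
  let ?L = "length vs"
  from cycle_struct[OF g vs(2,1,3)] obtain h where
    h: "\<forall>i<?L. h i \<in> T \<and> ends (h i) = {vs!i, vs!(Suc i mod ?L)}"
    "inj_on h {..<?L}" "C = h ` {..<?L}" using vs(4) by auto
  have cardC: "card C = ?L" using h(2,3) by (simp add: card_image)
  show ?thesis
  proof (rule ccontr)
    assume "\<not> odd (card C)"
    then have ev: "even ?L" using cardC by simp
    obtain n where n: "?L = Suc n" using vs(1) by (cases ?L) auto
    with ev have on: "odd n" by simp
    let ?g = "\<lambda>i. col ends (h i)"
    have inj_g: "inj_on ?g {..<?L}"
      using h(2) col_inj[OF g] by (simp add: inj_on_def)
    have gi: "?g i = axis (vs!i) 1 + axis (vs!(Suc i mod ?L)) 1" if "i < ?L" for i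
    proof -
      have "vs!i \<noteq> vs!(Suc i mod ?L)" using vs(3) that adj_irrefl[OF g] by metis
      then show ?thesis using col_pair h(1) that by blast
    qed
    have s0: "(\<Sum>i<?L. (-1::real)^i *\<^sub>R ?g i) = 0"
    proof -
      have "(\<Sum>i<?L. (-1::real)^i *\<^sub>R ?g i) =
        (\<Sum>i<Suc n. (-1)^i *\<^sub>R (axis (vs!i) 1 + axis (vs!(Suc i mod Suc n)) 1))"
        using gi n by (intro sum.cong) auto
      also have "\<dots> = 0" using alt_sum_zero[of vs n "\<lambda>u. axis u 1"] n on by simp
      finally show ?thesis .
    qed
    define u where "u v = (-1::real)^(inv_into {..<?L} ?g v)" for v
    have "dependent (col ends ` T)"
      unfolding real_vector.dependent_explicit
    proof (intro exI conjI)
      show "finite (?g ` {..<?L})" by simp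
      show "?g ` {..<?L} \<subseteq> col ends ` T" using h(1) by auto
      have "(\<Sum>v\<in>?g ` {..<?L}. u v *\<^sub>R v) = (\<Sum>i<?L. u (?g i) *\<^sub>R ?g i)"
        by (rule sum.reindex[OF inj_g, unfolded comp_def])
      also have "\<dots> = (\<Sum>i<?L. (-1::real)^i *\<^sub>R ?g i)"
        using inj_g by (intro sum.cong) (auto simp: u_def inv_into_f_f[OF inj_g])
      finally show "(\<Sum>v\<in>?g ` {..<?L}. u v *\<^sub>R v) = 0" using s0 by simp
      show "\<exists>v\<in>?g ` {..<?L}. u v \<noteq> 0" using n by (auto simp: u_def)
    qed
    with ind show False by simp
  qed
qed

lemma chain_reach:
  assumes "\<And>i. a \<le> i \<Longrightarrow> i < b \<Longrightarrow> R (xs!i) (xs!Suc i)" "a \<le> b"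
  shows "R\<^sup>*\<^sup>* (xs!a) (xs!b)"
  using assms
proof (induction b)
  case 0 then show ?case by simp
next
  case (Suc b)
  show ?case
  proof (cases "a = Suc b")
    case True then show ?thesis by simp
  next
    case False
    then have "a \<le> b" using Suc.prems by simp
    then have "R\<^sup>*\<^sup>* (xs!a) (xs!b)" using Suc by simp
    moreover have "R (xs!b) (xs!Suc b)" using Suc.prems \<open>a \<le> b\<close> by simp
    ultimately show ?thesis by simp
  qed
qed

lemma cw_reach:
  assumes "cw R ws" "i < length ws"
  shows "R\<^sup>*\<^sup>* (ws!0) (ws!i)"
proof -
  have "R (ws!j) (ws!Suc j)" if "j < i" for j
  proof -
    have j: "j < length ws" "Suc j < length ws" using assms(2) that by simp_all
    then have "Suc j mod length ws = Suc j" by simp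
    then show ?thesis using assms(1) j unfolding cw_def by metis
  qed
  then show ?thesis using chain_reach[of 0 i R ws] by simp
qed

lemma comp_sym:
  "u \<in> component ends T v \<Longrightarrow> w \<in> component ends T v \<Longrightarrow> (adj ends T)\<^sup>*\<^sup>* u w"
proof -
  assume "u \<in> component ends T v" "w \<in> component ends T v"
  then have "(adj ends T)\<^sup>*\<^sup>* v u" "(adj ends T)\<^sup>*\<^sup>* v w" by (simp_all add: component_def)
  then show ?thesis using adj_rtranclp_sym rtranclp_trans by metis
qed

lemma bij_good:
  fixes ends :: "'e::finite \<Rightarrow> 'v::finite set"
  assumes g: "simple_graph ends" and b: "bijective_graph ends T"
  shows "\<forall>x. \<exists>ws. cw (adj ends T) ws \<and> odd (length ws) \<and> (adj ends T)\<^sup>*\<^sup>* x (ws!0)"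
proof
  fix x
  from b have "odd_unicyclic_comp ends T x" by (simp add: bijective_graph_def)
  then obtain C where C: "cycle_in_comp ends T C x" "odd (card C)"
    unfolding odd_unicyclic_comp_def by blast
  then obtain vs where vs: "3 \<le> length vs" "distinct vs"
    "\<forall>i<length vs. adj ends T (vs!i) (vs!(Suc i mod length vs))"
    "C = {k\<in>T. \<exists>i<length vs. ends k = {vs ! i, vs ! (Suc i mod length vs)}}"
    "\<forall>k\<in>C. ends k \<subseteq> component ends T x"
    by (auto simp: cycle_in_comp_def is_cycle_def)
  have cc: "card C = length vs" using is_cycle_card[OF g vs(2,1,3)] vs(4) by simp
  have cwv: "cw (adj ends T) vs" using vs(1,3) by (auto simp: cw_def)
  have L0: "0 < length vs" using vs(1) by linarith
  then have "adj ends T (vs!0) (vs!(Suc 0 mod length vs))" using vs(3) by blast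
  then obtain k where k: "k \<in> T" "ends k = {vs!0, vs!(Suc 0 mod length vs)}"
    unfolding adj_def by blast
  then have "k \<in> C" unfolding vs(4) using L0 by blast
  then have "vs!0 \<in> component ends T x" using vs(5) k(2) by auto
  then have "(adj ends T)\<^sup>*\<^sup>* x (vs!0)" by (simp add: component_def)
  then show "\<exists>ws. cw (adj ends T) ws \<and> odd (length ws) \<and> (adj ends T)\<^sup>*\<^sup>* x (ws!0)"
    using cwv C(2) cc by auto
qed

lemma cycle_in_comp_data:
  fixes ends :: "'e::finite \<Rightarrow> 'v::finite set"
  assumes g: "simple_graph ends" and c: "cycle_in_comp ends T C v"
  obtains vs h where "3 \<le> length vs" "distinct vs"
    "\<forall>i<length vs. adj ends T (vs!i) (vs!(Suc i mod length vs))"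
    "\<forall>i<length vs. h i \<in> T \<and> ends (h i) = {vs!i, vs!(Suc i mod length vs)}"
    "inj_on h {..<length vs}" "C = h ` {..<length vs}"
    "\<forall>k\<in>C. ends k \<subseteq> component ends T v"
proof -
  from c obtain vs where vs: "3 \<le> length vs" "distinct vs"
    "\<forall>i<length vs. adj ends T (vs!i) (vs!(Suc i mod length vs))"
    "C = {k\<in>T. \<exists>i<length vs. ends k = {vs ! i, vs ! (Suc i mod length vs)}}"
    "\<forall>k\<in>C. ends k \<subseteq> component ends T v"
    by (auto simp: cycle_in_comp_def is_cycle_def)
  from cycle_struct[OF g vs(2,1,3)] obtain h where
    "\<forall>i<length vs. h i \<in> T \<and> ends (h i) = {vs!i, vs!(Suc i mod length vs)}"
    "inj_on h {..<length vs}" "C = h ` {..<length vs}" using vs(4) by auto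
  then show ?thesis using that vs by blast
qed

lemma uniq_aux:
  fixes ends :: "'e::finite \<Rightarrow> 'v::finite set"
  assumes g: "simple_graph ends" and ind: "independent (col ends ` T)"
    and good: "\<forall>x. \<exists>ws. cw (adj ends T) ws \<and> odd (length ws) \<and> (adj ends T)\<^sup>*\<^sup>* x (ws!0)"
    and c1: "cycle_in_comp ends T C1 v" and o1: "odd (card C1)"
    and c2: "cycle_in_comp ends T C2 v" and f: "f \<in> C2" "f \<notin> C1"
  shows False
proof -
  define T' where "T' = T - {f}"
  let ?R = "adj ends T" and ?R' = "adj ends T'"
  obtain vs2 h2 where v2: "3 \<le> length vs2" "distinct vs2"
    "\<forall>i<length vs2. ?R (vs2!i) (vs2!(Suc i mod length vs2))"
    "\<forall>i<length vs2. h2 i \<in> T \<and> ends (h2 i) = {vs2!i, vs2!(Suc i mod length vs2)}"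
    "inj_on h2 {..<length vs2}" "C2 = h2 ` {..<length vs2}"
    "\<forall>k\<in>C2. ends k \<subseteq> component ends T v"
    by (rule cycle_in_comp_data[OF g c2])
  let ?L = "length vs2"
  from f(1) v2(6) obtain j where j: "j < ?L" "f = h2 j" by auto
  have step2: "?R' (vs2!i) (vs2!(Suc i mod ?L))" if "i < ?L" "i \<noteq> j" for i
  proof -
    have "h2 i \<noteq> f" using j that v2(5) by (auto simp: inj_on_def)
    then have "h2 i \<in> T'" using v2(4) that by (simp add: T'_def)
    then show ?thesis using v2(4) that by (auto simp: adj_def)
  qed
  have step2': "?R' (vs2!i) (vs2!Suc i)" if "Suc i < ?L" "i \<noteq> j" for i
    using step2[of i] that by simp
  let ?a = "vs2!j" and ?b = "vs2!(Suc j mod ?L)"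
  have R0: "?R'\<^sup>*\<^sup>* (vs2!0) ?a"
    using chain_reach[of 0 j ?R' vs2] step2' j by simp
  have conn: "?R'\<^sup>*\<^sup>* ?b ?a"
  proof (cases "Suc j < ?L")
    case True
    then have b: "?b = vs2!(Suc j)" by simp
    have "?R'\<^sup>*\<^sup>* (vs2!(Suc j)) (vs2!(?L - 1))"
      using chain_reach[of "Suc j" "?L - 1" ?R' vs2] step2' True by simp
    moreover have "?R' (vs2!(?L - 1)) (vs2!0)"
    proof -
      have "?L - 1 \<noteq> j" "?L - 1 < ?L" using True by auto
      moreover have "Suc (?L - 1) = ?L" using j by simp
      then have "Suc (?L - 1) mod ?L = 0" by simp
      ultimately show ?thesis using step2[of "?L - 1"] by simp
    qed
    ultimately have "?R'\<^sup>*\<^sup>* (vs2!(Suc j)) (vs2!0)" by (rule rtranclp.rtrancl_into_rtrancl)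
    then have "?R'\<^sup>*\<^sup>* (vs2!(Suc j)) ?a" using R0 by (rule rtranclp_trans)
    then show ?thesis using b by simp
  next
    case False
    then have "Suc j = ?L" using j by simp
    then have "?b = vs2!0" by simp
    then show ?thesis using R0 by simp
  qed
  have ef: "ends f = {?a, ?b}" using v2(4) j by simp
  have repl: "?R'\<^sup>*\<^sup>* u w" if "?R u w" for u w
  proof -
    from that obtain k where k: "k \<in> T" "ends k = {u, w}" by (auto simp: adj_def)
    show ?thesis
    proof (cases "k = f")
      case True
      then have "{u, w} = {?a, ?b}" using k ef by simp
      then consider "u = ?a" "w = ?b" | "u = ?b" "w = ?a" by (auto simp: doubleton_eq_iff)
      then show ?thesis
      proof cases
        case 1 then show ?thesis using conn adj_rtranclp_sym by metis
      next
        case 2 then show ?thesis using conn by simp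
      qed
    next
      case False
      then have "?R' u w" using k by (auto simp: adj_def T'_def)
      then show ?thesis by simp
    qed
  qed
  have reachT: "?R'\<^sup>*\<^sup>* x y" if "?R\<^sup>*\<^sup>* x y" for x y
    using that
  proof (induction rule: rtranclp_induct)
    case base then show ?case by simp
  next
    case (step y z) then show ?case using repl[of y z] by (meson rtranclp_trans)
  qed
  have good': "\<exists>ws. cw ?R' ws \<and> odd (length ws) \<and> ?R'\<^sup>*\<^sup>* x (ws!0)" for x
  proof (cases "x \<in> component ends T v")
    case True
    obtain vs1 h1 where v1: "3 \<le> length vs1" "distinct vs1"
      "\<forall>i<length vs1. ?R (vs1!i) (vs1!(Suc i mod length vs1))"
      "\<forall>i<length vs1. h1 i \<in> T \<and> ends (h1 i) = {vs1!i, vs1!(Suc i mod length vs1)}"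
      "inj_on h1 {..<length vs1}" "C1 = h1 ` {..<length vs1}"
      "\<forall>k\<in>C1. ends k \<subseteq> component ends T v"
      by (rule cycle_in_comp_data[OF g c1])
    have L1: "0 < length vs1" using v1(1) by linarith
    have "?R' (vs1!i) (vs1!(Suc i mod length vs1))" if "i < length vs1" for i
    proof -
      have "h1 i \<in> C1" using v1(6) that by simp
      then have "h1 i \<in> T'" using f(2) v1(4) that by (auto simp: T'_def)
      then show ?thesis using v1(4) that by (auto simp: adj_def)
    qed
    then have cw1: "cw ?R' vs1" using L1 by (auto simp: cw_def)
    have "card C1 = length vs1" using v1(5,6) by (simp add: card_image)
    then have od: "odd (length vs1)" using o1 by simp
    have "h1 0 \<in> C1" using v1(6) L1 by simp
    then have "vs1!0 \<in> component ends T v" using v1(7) v1(4) L1 by auto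
    then have "?R\<^sup>*\<^sup>* x (vs1!0)" using comp_sym True by metis
    then show ?thesis using cw1 od reachT by blast
  next
    case False
    from good obtain ws where ws: "cw ?R ws" "odd (length ws)" "?R\<^sup>*\<^sup>* x (ws!0)" by blast
    have "?R' (ws!i) (ws!(Suc i mod length ws))" if i: "i < length ws" for i
    proof -
      have "?R (ws!i) (ws!(Suc i mod length ws))" using ws(1) i by (simp add: cw_def)
      then obtain k where k: "k \<in> T" "ends k = {ws!i, ws!(Suc i mod length ws)}" by (auto simp: adj_def)
      have "k \<noteq> f"
      proof
        assume "k = f"
        then have "ws!i \<in> component ends T v" using v2(7) f(1) k(2) by auto
        moreover have "?R\<^sup>*\<^sup>* x (ws!i)" using ws(3) cw_reach[OF ws(1) i] by (meson rtranclp_trans)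
        ultimately have "?R\<^sup>*\<^sup>* v x" unfolding component_def
          using adj_rtranclp_sym rtranclp_trans by (metis mem_Collect_eq)
        then have "x \<in> component ends T v" by (simp add: component_def)
        with False show False by simp
      qed
      then show ?thesis using k by (auto simp: adj_def T'_def)
    qed
    then have "cw ?R' ws" using ws(1) by (simp add: cw_def)
    then show ?thesis using ws(2,3) reachT by blast
  qed
  have sp: "span (col ends ` T') = UNIV" using span_good[OF g] good' by blast
  have "col ends ` T' = col ends ` T - {col ends f}"
    using col_inj[OF g] by (auto simp: T'_def)
  moreover have "f \<in> T" using v2(4) j by simp
  ultimately have "col ends f \<in> col ends ` T" "col ends f \<in> span (col ends ` T - {col ends f})"
    using sp by auto
  then have "dependent (col ends ` T)"
    unfolding real_vector.dependent_def by blast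
  with ind show False by simp
qed

lemma indep_span_bij:
  fixes ends :: "'e::finite \<Rightarrow> 'v::finite set"
  assumes g: "simple_graph ends" and ind: "independent (col ends ` T)"
    and sp: "span (col ends ` T) = UNIV"
  shows "bijective_graph ends T"
proof -
  let ?R = "adj ends T"
  have good: "\<forall>x. \<exists>ws. cw ?R ws \<and> odd (length ws) \<and> ?R\<^sup>*\<^sup>* x (ws!0)"
  proof
    fix x
    from odd_walk_exists[OF g sp, of x] obtain ws where
      ws: "cw ?R ws" "odd (length ws)" "set ws \<subseteq> component ends T x" by blast
    then have "ws \<noteq> []" by (simp add: cw_def)
    then have "ws!0 \<in> set ws" by simp
    then have "?R\<^sup>*\<^sup>* x (ws!0)" using ws(3) by (auto simp: component_def)
    then show "\<exists>ws. cw ?R ws \<and> odd (length ws) \<and> ?R\<^sup>*\<^sup>* x (ws!0)" using ws by blast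
  qed
  have "odd_unicyclic_comp ends T v" for v
  proof -
    from odd_walk_exists[OF g sp, of v] obtain ws where
      ws: "cw ?R ws" "odd (length ws)" "distinct ws" "set ws \<subseteq> component ends T v" by blast
    let ?L = "length ws"
    have st: "\<forall>i<?L. ?R (ws!i) (ws!(Suc i mod ?L))" using ws(1) by (simp add: cw_def)
    have "?L \<noteq> 1"
    proof
      assume "?L = 1"
      then have "?R (ws!0) (ws!(Suc 0 mod ?L))" using st by simp
      then have "?R (ws!0) (ws!0)" using \<open>?L = 1\<close> by simp
      then show False using adj_irrefl[OF g] by blast
    qed
    moreover have "?L \<noteq> 0" using ws(1) by (simp add: cw_def)
    moreover have "?L \<noteq> 2" using ws(2) by auto
    ultimately have L3: "3 \<le> ?L" by linarith
    define C where "C = {k\<in>T. \<exists>i<?L. ends k = {ws ! i, ws ! (Suc i mod ?L)}}"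
    have isc: "is_cycle ends T C" unfolding is_cycle_def C_def
      by (rule exI[of _ ws]) (use L3 ws(3) st in simp)
    have cc: "card C = ?L" unfolding C_def using is_cycle_card[OF g ws(3) L3 st] .
    have "ends k \<subseteq> component ends T v" if "k \<in> C" for k
    proof -
      from that obtain i where i: "i < ?L" "ends k = {ws ! i, ws ! (Suc i mod ?L)}"
        by (auto simp: C_def)
      have "0 < ?L" using i(1) by linarith
      then have "Suc i mod ?L < ?L" by (rule mod_less_divisor)
      then have "ws ! (Suc i mod ?L) \<in> set ws" "ws ! i \<in> set ws" using i(1) by simp_all
      then show ?thesis using i(2) ws(4) by auto
    qed
    then have cic: "cycle_in_comp ends T C v" using isc by (simp add: cycle_in_comp_def)
    have "C' = C" if c': "cycle_in_comp ends T C' v" for C'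
    proof (rule ccontr)
      assume ne: "C' \<noteq> C"
      show False
      proof (cases "C' - C = {}")
        case False
        then obtain f where "f \<in> C'" "f \<notin> C" by blast
        moreover have "odd (card C)" using cc ws(2) by simp
        ultimately show False using uniq_aux[OF g ind good cic _ c'] by blast
      next
        case True
        then obtain f where "f \<in> C" "f \<notin> C'" using ne by blast
        moreover have "odd (card C')" using cycle_odd[OF g ind] c' by (simp add: cycle_in_comp_def)
        ultimately show False using uniq_aux[OF g ind good c' _ cic] by blast
      qed
    qed
    moreover have "odd (card C)" using cc ws(2) by simp
    ultimately show ?thesis unfolding odd_unicyclic_comp_def using cic by blast
  qed
  then show ?thesis by (simp add: bijective_graph_def)
qed

lemma Amult: "incidence ends *v x = (\<Sum>k\<in>UNIV. x$k *\<^sub>R col ends k)"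
  by (simp add: matrix_mult_sum scalar_mult_eq_scaleR)

lemma Amult_restrict:
  assumes "\<And>l. l \<notin> S \<Longrightarrow> x$l = 0"
  shows "incidence ends *v x = (\<Sum>k\<in>S. x$k *\<^sub>R col ends k)"
proof -
  have "incidence ends *v x = (\<Sum>k\<in>UNIV. if k \<in> S then x$k *\<^sub>R col ends k else 0)"
    unfolding Amult using assms by (intro sum.cong) auto
  also have "\<dots> = (\<Sum>k\<in>S. x$k *\<^sub>R col ends k)" by (simp add: sum.If_cases)
  finally show ?thesis .
qed

lemma small_step:
  fixes \<mu> w :: "real^'e::finite"
  assumes "\<forall>l. \<mu>$l \<ge> 0" "\<forall>l. \<mu>$l = 0 \<longrightarrow> w$l = 0"
  shows "\<exists>t>0. \<forall>l. \<mu>$l + t * w$l \<ge> 0 \<and> \<mu>$l - t * w$l \<ge> 0"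
proof -
  define M where "M = insert 1 ((\<lambda>l. \<mu>$l / (\<bar>w$l\<bar> + 1)) ` {l. \<mu>$l > 0})"
  define t where "t = Min M"
  have fM: "finite M" "M \<noteq> {}" by (auto simp: M_def)
  have "\<forall>x\<in>M. x > 0" by (auto simp: M_def)
  then have tpos: "t > 0" using fM by (simp add: t_def)
  have "\<mu>$l + t * w$l \<ge> 0 \<and> \<mu>$l - t * w$l \<ge> 0" for l
  proof (cases "\<mu>$l > 0")
    case True
    then have "t \<le> \<mu>$l / (\<bar>w$l\<bar> + 1)" using fM by (auto simp: t_def M_def)
    then have "t * (\<bar>w$l\<bar> + 1) \<le> \<mu>$l" by (simp add: pos_le_divide_eq add_pos_nonneg)
    then have "t * \<bar>w$l\<bar> \<le> \<mu>$l" using tpos by (simp add: algebra_simps)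
    moreover have "\<bar>t * w$l\<bar> = t * \<bar>w$l\<bar>" using tpos by (simp add: abs_mult)
    ultimately show ?thesis by linarith
  next
    case False
    moreover have "\<mu>$l \<ge> 0" using assms(1) by blast
    ultimately have "\<mu>$l = 0" by linarith
    then show ?thesis using assms(2) by simp
  qed
  then show ?thesis using tpos by blast
qed

lemma vertex_in: "is_vertex P \<mu> \<Longrightarrow> \<mu> \<in> P"
  by (simp add: is_vertex_def face_of_singleton extreme_point_of_def)

lemma P_mem: "\<mu> \<in> Pi_ge0 ends lam \<longleftrightarrow> (\<forall>k. \<mu>$k \<ge> 0) \<and> incidence ends *v \<mu> = lam"
  by (simp add: Pi_ge0_def)

lemma vertex_indep:
  fixes ends :: "'e::finite \<Rightarrow> 'v::finite set"
  assumes g: "simple_graph ends" and v: "is_vertex (Pi_ge0 ends lam) \<mu>"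
  shows "independent (col ends ` support \<mu>)"
proof (rule ccontr)
  let ?P = "Pi_ge0 ends lam" and ?S = "support \<mu>"
  assume "\<not> independent (col ends ` ?S)"
  then have "dependent (col ends ` ?S)" by simp
  then have "\<exists>u. (\<exists>v\<in>col ends ` ?S. u v \<noteq> 0) \<and> (\<Sum>v\<in>col ends ` ?S. u v *\<^sub>R v) = 0"
    using real_vector.dependent_finite[of "col ends ` ?S"] by simp
  then obtain u where u: "\<exists>v\<in>col ends ` ?S. u v \<noteq> 0" "(\<Sum>v\<in>col ends ` ?S. u v *\<^sub>R v) = 0"
    by blast
  have mP: "\<mu> \<in> ?P" using v by (rule vertex_in)
  then have m0: "\<forall>l. \<mu>$l \<ge> 0" "incidence ends *v \<mu> = lam" by (auto simp: P_mem)
  define w :: "real^'e" where "w = (\<chi> l. if l \<in> ?S then u (col ends l) else 0)"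
  have Aw: "incidence ends *v w = 0"
  proof -
    have "incidence ends *v w = (\<Sum>k\<in>?S. w$k *\<^sub>R col ends k)"
      by (rule Amult_restrict) (simp add: w_def)
    also have "\<dots> = (\<Sum>k\<in>?S. u (col ends k) *\<^sub>R col ends k)" by (simp add: w_def)
    also have "\<dots> = (\<Sum>v\<in>col ends ` ?S. u v *\<^sub>R v)"
      by (rule sum.reindex[OF inj_col[OF g], unfolded comp_def, symmetric])
    finally show ?thesis using u(2) by simp
  qed
  have wne: "w \<noteq> 0"
  proof
    assume w0: "w = 0"
    from u(1) obtain l where l: "l \<in> ?S" "u (col ends l) \<noteq> 0" by blast
    have "w $ l = u (col ends l)" using l(1) by (simp add: w_def)
    then show False using w0 l(2) by simp
  qed
  have "\<forall>l. \<mu>$l = 0 \<longrightarrow> w$l = 0" by (simp add: w_def support_def)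
  then obtain t where t: "t > 0" "\<forall>l. \<mu>$l + t * w$l \<ge> 0 \<and> \<mu>$l - t * w$l \<ge> 0"
    using small_step m0(1) by blast
  define a where "a = \<mu> + t *\<^sub>R w"
  define b where "b = \<mu> - t *\<^sub>R w"
  have aP: "a \<in> ?P" using t m0 Aw
    by (auto simp: P_mem a_def matrix_vector_right_distrib matrix_vector_mult_scaleR)
  have bP: "b \<in> ?P" using t m0 Aw
    by (auto simp: P_mem b_def matrix_vector_mult_diff_distrib matrix_vector_mult_scaleR)
  have ab: "a \<noteq> b"
  proof
    assume "a = b"
    have "a - b = t *\<^sub>R w + t *\<^sub>R w" unfolding a_def b_def by simp
    with \<open>a = b\<close> have "t *\<^sub>R w + t *\<^sub>R w = 0" by simp
    moreover have "(t + t) *\<^sub>R w = t *\<^sub>R w + t *\<^sub>R w" by (rule scaleR_left_distrib)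
    ultimately have "(t + t) *\<^sub>R w = 0" by simp
    then show False using t(1) wne by (simp only: scaleR_eq_0_iff) simp
  qed
  have "(1/2::real) *\<^sub>R (\<mu> + t *\<^sub>R w) + (1/2::real) *\<^sub>R (\<mu> - t *\<^sub>R w) = (1/2::real) *\<^sub>R ((\<mu> + t *\<^sub>R w) + (\<mu> - t *\<^sub>R w))"
    by (rule scaleR_add_right[symmetric])
  also have "(\<mu> + t *\<^sub>R w) + (\<mu> - t *\<^sub>R w) = \<mu> + \<mu>" by simp
  also have "(1/2::real) *\<^sub>R (\<mu> + \<mu>) = \<mu>" by (rule scaleR_half_double)
  finally have "\<mu> = (1 - 1/2) *\<^sub>R a + (1/2) *\<^sub>R b" unfolding a_def b_def by simp
  then have "\<mu> \<in> open_segment a b" using ab unfolding in_segment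
    by (intro conjI exI[of _ "1/2"]) auto
  moreover have "\<mu> extreme_point_of ?P" using v by (simp add: is_vertex_def face_of_singleton)
  ultimately show False using aP bP by (auto simp: extreme_point_of_def)
qed

locale ctx =
  fixes ends :: "'e::finite \<Rightarrow> 'v::finite set" and lam :: "real^'v" and p :: "real^'e"
  assumes g: "simple_graph ends" and lam_pos: "\<forall>i. lam $ i > 0"
    and p_pos: "\<forall>k. p $ k > 0" and p_A: "incidence ends *v p = lam"
begin

abbreviation "PP \<equiv> Pi_ge0 ends lam"
definition Fk :: "'e \<Rightarrow> (real^'e) set" where "Fk k = PP \<inter> {x. x $ k = 0}"

lemma pP: "p \<in> PP" using p_pos p_A by (auto simp: P_mem less_imp_le)

lemma convex_P: "convex PP"
proof -
  have "PP = {x. \<forall>k. x$k \<ge> 0} \<inter> {x. incidence ends *v x = lam}" by (auto simp: Pi_ge0_def)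
  moreover have "convex {x::real^'e. \<forall>k. x$k \<ge> 0}"
    by (auto simp: convex_def intro!: add_nonneg_nonneg mult_nonneg_nonneg)
  moreover have "convex {x. incidence ends *v x = lam}"
  proof (rule convexI)
    fix x y :: "real^'e" and u v :: real
    assume "x \<in> {x. incidence ends *v x = lam}" "y \<in> {x. incidence ends *v x = lam}" "u + v = 1"
    then show "u *\<^sub>R x + v *\<^sub>R y \<in> {x. incidence ends *v x = lam}"
      by (simp add: matrix_vector_right_distrib matrix_vector_mult_scaleR scaleR_left_distrib[symmetric])
  qed
  ultimately show ?thesis by (simp add: convex_Int)
qed

lemma Fk_eq: "Fk k = PP \<inter> {x. (- axis k 1) \<bullet> x = 0}"
  by (auto simp: Fk_def inner_axis')

lemma Fk_face: "Fk k face_of PP"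
  unfolding Fk_eq
  by (rule face_of_Int_supporting_hyperplane_le[OF convex_P]) (auto simp: inner_axis' P_mem)

lemma Fk_ne_P: "Fk k \<noteq> PP"
proof
  assume "Fk k = PP"
  then have "p \<in> Fk k" using pP by simp
  then have "p $ k = 0" by (simp add: Fk_def)
  then show False using p_pos by (metis less_irrefl)
qed

lemma polyhedron_P: "polyhedron PP"
proof -
  have "PP = (\<Inter>k\<in>UNIV. {x. axis k 1 \<bullet> x \<ge> 0}) \<inter> (\<Inter>i\<in>UNIV. {x. row i (incidence ends) \<bullet> x = lam $ i})"
  proof -
    have ax: "\<And>k x. axis k 1 \<bullet> (x::real^'e) = x $ k" by (simp add: inner_axis')
    have rw: "\<And>i x. row i (incidence ends) \<bullet> x = (incidence ends *v x) $ i"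
      by (simp add: matrix_vector_mult_def row_def inner_vec_def)
    show ?thesis by (auto simp: Pi_ge0_def ax rw vec_eq_iff)
  qed
  moreover have "polyhedron (\<Inter>k\<in>UNIV. {x::real^'e. axis k 1 \<bullet> x \<ge> 0})"
    by (rule polyhedron_Inter) (auto simp: polyhedron_halfspace_ge)
  moreover have "polyhedron (\<Inter>i\<in>UNIV. {x. row i (incidence ends) \<bullet> x = lam $ i})"
    by (rule polyhedron_Inter) (auto simp: polyhedron_hyperplane)
  ultimately show ?thesis by simp
qed

lemma irred_point:
  assumes "\<not> redundant ends lam k"
  shows "\<exists>r\<in>PP. r $ k = 0 \<and> (\<forall>l. l \<noteq> k \<longrightarrow> r $ l > 0)"
proof -
  have "PP \<subseteq> {\<mu>. incidence ends *v \<mu> = lam \<and> (\<forall>l. l \<noteq> k \<longrightarrow> \<mu> $ l \<ge> 0)}"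
    by (auto simp: P_mem)
  with assms obtain q where q: "incidence ends *v q = lam" "\<forall>l. l \<noteq> k \<longrightarrow> q $ l \<ge> 0" "q \<notin> PP"
    unfolding redundant_def by blast
  then have qk: "q $ k < 0" by (auto simp: P_mem) (metis not_le)
  have pk: "p $ k > 0" using p_pos by simp
  define t where "t = p $ k / (p $ k - q $ k)"
  have t: "0 < t" "t < 1" using pk qk by (auto simp: t_def divide_simps)
  define r where "r = (1 - t) *\<^sub>R p + t *\<^sub>R q"
  have rA: "incidence ends *v r = lam"
    using p_A q(1) by (simp add: r_def matrix_vector_right_distrib matrix_vector_mult_scaleR
        scaleR_left_distrib[symmetric])
  have rk: "r $ k = 0"
  proof -
    have "r $ k = (1 - t) * p $ k + t * q $ k" by (simp add: r_def)
    also have "\<dots> = p $ k - t * (p $ k - q $ k)" by (simp add: algebra_simps)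
    also have "t * (p $ k - q $ k) = p $ k" using pk qk by (simp add: t_def)
    finally show ?thesis by simp
  qed
  have rl: "r $ l > 0" if "l \<noteq> k" for l
  proof -
    have "r $ l = (1 - t) * p $ l + t * q $ l" by (simp add: r_def)
    moreover have "(1 - t) * p $ l > 0" using t p_pos by simp
    moreover have "t * q $ l \<ge> 0" using t q(2) that by simp
    ultimately show ?thesis by linarith
  qed
  have "r \<in> PP" using rA rk rl by (auto simp: P_mem) (metis less_imp_le order_refl)
  then show ?thesis using rk rl by blast
qed

lemma face_in_Fk:
  assumes F: "F face_of PP" and ne: "F \<noteq> PP"
  shows "\<exists>k. F \<subseteq> Fk k"
proof (rule ccontr)
  assume "\<not> (\<exists>k. F \<subseteq> Fk k)"
  then have "\<forall>k. \<exists>x\<in>F. x $ k \<noteq> 0" using face_of_imp_subset[OF F] by (auto simp: Fk_def)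
  then obtain X where X: "\<And>k. X k \<in> F" "\<And>k. X k $ k \<noteq> 0" by metis
  have FP: "F \<subseteq> PP" using face_of_imp_subset[OF F] .
  have Xnn: "X k $ l \<ge> 0" for k l
  proof -
    have "X k \<in> PP" using X(1)[of k] FP by blast
    then show ?thesis by (simp add: P_mem)
  qed
  have Xpos: "X k $ k > 0" for k using Xnn[of k k] X(2)[of k] by linarith
  define m where "m = real CARD('e)"
  have m: "m > 0" by (simp add: m_def)
  define z where "z = (\<Sum>k\<in>UNIV. (1/m) *\<^sub>R X k)"
  have zF: "z \<in> F"
    unfolding z_def
  proof (rule convex_sum)
    show "convex F" using F by (rule face_of_imp_convex)
    show "(\<Sum>i\<in>(UNIV::'e set). 1/m) = 1" using m by (simp add: m_def)
  qed (use X m in auto)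
  have zpos: "z $ l > 0" for l
  proof -
    have "z $ l = (\<Sum>k\<in>UNIV. (1/m) * X k $ l)" by (simp add: z_def)
    also have "\<dots> \<ge> (1/m) * X l $ l"
      by (rule member_le_sum[where f="\<lambda>k. (1/m) * X k $ l"]) (use m Xnn in auto)
    finally show ?thesis using m Xpos[of l] by (smt (verit) divide_pos_pos mult_pos_pos)
  qed
  have zP: "z \<in> PP" using zF FP by auto
  have "y \<in> F" if yP: "y \<in> PP" for y
  proof (cases "y = z")
    case True then show ?thesis using zF by simp
  next
    case False
    have "\<forall>l. z $ l \<ge> 0" using zpos less_imp_le by blast
    moreover have "\<forall>l. z $ l = 0 \<longrightarrow> (z - y) $ l = 0" using zpos by (metis less_irrefl)
    ultimately obtain t where t: "t > 0" "\<forall>l. z$l + t * (z - y)$l \<ge> 0"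
      using small_step[of z "z - y"] by blast
    define b where "b = z + t *\<^sub>R (z - y)"
    have bP: "b \<in> PP"
    proof -
      have "\<forall>l. b $ l \<ge> 0" using t by (simp add: b_def)
      moreover have "incidence ends *v b = lam"
        using zP yP by (simp add: b_def P_mem matrix_vector_right_distrib matrix_vector_mult_scaleR
            matrix_vector_mult_diff_distrib)
      ultimately show ?thesis by (simp add: P_mem)
    qed
    have yb: "y \<noteq> b"
    proof
      assume "y = b"
      have "y $ l = z $ l" for l
      proof -
        have "y $ l = z $ l + t * (z $ l - y $ l)" using \<open>y = b\<close> by (simp add: b_def vec_eq_iff)
        then have "(1 + t) * (y $ l - z $ l) = 0" by (simp add: algebra_simps)
        then show ?thesis using t(1) by simp
      qed
      then show False using False by (simp add: vec_eq_iff)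
    qed
    define \<theta> where "\<theta> = 1 / (1 + t)"
    have th: "0 < \<theta>" "\<theta> < 1" using t(1) by (auto simp: \<theta>_def)
    have "z = (1 - \<theta>) *\<^sub>R y + \<theta> *\<^sub>R b"
    proof -
      have "z $ l = (1 - \<theta>) * y $ l + \<theta> * b $ l" for l
      proof -
        have hb: "b $ l = z $ l + t * (z $ l - y $ l)" by (simp add: b_def)
        have th1: "\<theta> * (1 + t) = 1" using t(1) by (simp add: \<theta>_def)
        have "(1 - \<theta>) * y $ l + \<theta> * (z $ l + t * (z $ l - y $ l)) =
              y $ l - (\<theta> * (1 + t)) * y $ l + (\<theta> * (1 + t)) * z $ l"
          by (simp add: algebra_simps)
        then have "(1 - \<theta>) * y $ l + \<theta> * (z $ l + t * (z $ l - y $ l)) = z $ l"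
          unfolding th1 by simp
        then show ?thesis unfolding hb by simp
      qed
      then show ?thesis by (simp add: vec_eq_iff)
    qed
    then have "z \<in> open_segment y b" using yb th unfolding in_segment by blast
    then show "y \<in> F" using F yP bP zF unfolding face_of_def by blast
  qed
  then have "F = PP" using FP by blast
  with ne show False by simp
qed

lemma facet_eq:
  assumes F: "F facet_of PP"
  shows "\<exists>k. F = Fk k"
proof -
  have Ff: "F face_of PP" "aff_dim F = aff_dim PP - 1" using F by (auto simp: facet_of_def)
  then have "F \<noteq> PP" by auto
  from face_in_Fk[OF Ff(1) this] obtain k where k: "F \<subseteq> Fk k" by blast
  have FkP: "Fk k \<subseteq> PP" by (auto simp: Fk_def)
  have lt1: "aff_dim (Fk k) < aff_dim PP"
    by (rule face_of_aff_dim_lt[OF convex_P Fk_face Fk_ne_P])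
  have "F = Fk k"
  proof (rule ccontr)
    assume ne: "F \<noteq> Fk k"
    have "F face_of Fk k" by (rule face_of_subset[OF Ff(1) k FkP])
    then have "aff_dim F < aff_dim (Fk k)"
      using face_of_aff_dim_lt[OF face_of_imp_convex[OF Fk_face] _ ne] by blast
    then show False using lt1 Ff(2) by linarith
  qed
  then show ?thesis by blast
qed

lemma irred_facet:
  assumes "\<not> redundant ends lam k"
  shows "Fk k facet_of PP"
proof -
  from irred_point[OF assms] obtain r where r: "r \<in> PP" "r $ k = 0" "\<forall>l. l \<noteq> k \<longrightarrow> r $ l > 0" by blast
  have rF: "r \<in> Fk k" using r by (simp add: Fk_def)
  then have "Fk k \<noteq> {}" by blast
  from face_of_polyhedron_subset_facet[OF polyhedron_P Fk_face this Fk_ne_P]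
  obtain F' where F': "F' facet_of PP" "Fk k \<subseteq> F'" by blast
  from facet_eq[OF F'(1)] obtain l where l: "F' = Fk l" by blast
  have "r $ l = 0" using rF F'(2) l by (auto simp: Fk_def)
  then have "l = k" using r(3) by (metis less_irrefl)
  then show ?thesis using F'(1) l by simp
qed

lemma Fk_inj:
  assumes "\<not> redundant ends lam k" "Fk k = Fk l"
  shows "k = l"
proof -
  from irred_point[OF assms(1)] obtain r where r: "r \<in> PP" "r $ k = 0" "\<forall>l. l \<noteq> k \<longrightarrow> r $ l > 0" by blast
  have "r \<in> Fk k" using r by (simp add: Fk_def)
  then have "r \<in> Fk l" using assms(2) by simp
  then have "r $ l = 0" by (simp add: Fk_def)
  then show ?thesis using r(3) by (metis less_irrefl)
qed

lemma count_facets: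
  assumes mP: "\<mu> \<in> PP" and irr: "\<forall>k. \<mu> $ k = 0 \<longrightarrow> \<not> redundant ends lam k"
  shows "card (facets_through PP \<mu>) = card {k. \<mu> $ k = 0}"
proof -
  have eq: "facets_through PP \<mu> = Fk ` {k. \<mu> $ k = 0}"
  proof
    show "facets_through PP \<mu> \<subseteq> Fk ` {k. \<mu> $ k = 0}"
    proof
      fix F assume "F \<in> facets_through PP \<mu>"
      then have F: "F facet_of PP" "\<mu> \<in> F" by (auto simp: facets_through_def)
      from facet_eq[OF F(1)] obtain l where l: "F = Fk l" by blast
      then have "\<mu> $ l = 0" using F(2) by (simp add: Fk_def)
      then show "F \<in> Fk ` {k. \<mu> $ k = 0}" using l by blast
    qed
    show "Fk ` {k. \<mu> $ k = 0} \<subseteq> facets_through PP \<mu>"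
      using irr irred_facet mP by (auto simp: facets_through_def Fk_def)
  qed
  have "inj_on Fk {k. \<mu> $ k = 0}"
    using irr Fk_inj by (auto simp: inj_on_def)
  then show ?thesis using eq by (simp add: card_image)
qed

lemma irred_span:
  assumes mP: "\<mu> \<in> PP" and sp: "span (col ends ` support \<mu>) = UNIV" and mk: "\<mu> $ k = 0"
  shows "\<not> redundant ends lam k"
proof
  assume red: "redundant ends lam k"
  let ?S = "support \<mu>"
  have kS: "k \<notin> ?S" using mk by (simp add: support_def)
  have m0: "\<forall>l. \<mu>$l \<ge> 0" "incidence ends *v \<mu> = lam" using mP by (auto simp: P_mem)
  have "col ends k \<in> span (col ends ` ?S)" using sp by simp
  then obtain u where u: "(\<Sum>v\<in>col ends ` ?S. u v *\<^sub>R v) = col ends k"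
    using real_vector.span_finite[of "col ends ` ?S"] by auto
  have u': "(\<Sum>l\<in>?S. u (col ends l) *\<^sub>R col ends l) = col ends k"
    using u sum.reindex[OF inj_col[OF g], of "\<lambda>v. u v *\<^sub>R v" ?S] by (simp add: comp_def)
  define w :: "real^'e" where "w = (\<chi> l. if l \<in> ?S then u (col ends l) else if l = k then -1 else 0)"
  have Aw: "incidence ends *v w = 0"
  proof -
    have "incidence ends *v w = (\<Sum>l\<in>insert k ?S. w$l *\<^sub>R col ends l)"
      by (rule Amult_restrict) (simp add: w_def)
    also have "\<dots> = w$k *\<^sub>R col ends k + (\<Sum>l\<in>?S. w$l *\<^sub>R col ends l)"
      using kS by simp
    also have "(\<Sum>l\<in>?S. w$l *\<^sub>R col ends l) = (\<Sum>l\<in>?S. u (col ends l) *\<^sub>R col ends l)"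
      by (rule sum.cong) (auto simp: w_def)
    also have "w$k = -1" using kS by (simp add: w_def)
    finally show ?thesis using u' by simp
  qed
  define w' :: "real^'e" where "w' = (\<chi> l. if l = k then 0 else w $ l)"
  have "\<forall>l. \<mu>$l = 0 \<longrightarrow> w'$l = 0" by (auto simp: w'_def w_def support_def)
  then obtain t where t: "t > 0" "\<forall>l. \<mu>$l + t * w'$l \<ge> 0 \<and> \<mu>$l - t * w'$l \<ge> 0"
    using small_step m0(1) by blast
  define q where "q = \<mu> + t *\<^sub>R w"
  have qA: "incidence ends *v q = lam"
    using m0(2) Aw by (simp add: q_def matrix_vector_right_distrib matrix_vector_mult_scaleR)
  have ql: "q $ l \<ge> 0" if "l \<noteq> k" for l
  proof -
    have "\<mu>$l + t * w'$l \<ge> 0" using t(2) by blast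
    then show ?thesis using that by (simp add: q_def w'_def)
  qed
  have qk: "q $ k < 0"
    using t(1) mk kS by (simp add: q_def w_def)
  have "q \<in> {\<mu>. incidence ends *v \<mu> = lam \<and> (\<forall>l. l \<noteq> k \<longrightarrow> \<mu> $ l \<ge> 0)}" using qA ql by blast
  then have "q \<in> PP" using red unfolding redundant_def by blast
  then show False using qk by (auto simp: P_mem) (metis not_le)
qed

lemma bounded_P: "bounded PP"
proof -
  define B where "B = (\<Sum>i\<in>UNIV. lam $ i)"
  have xb: "x $ k \<le> B" if xP: "x \<in> PP" for x k
  proof -
    obtain u w where uw: "ends k = {u, w}" using ends2[OF g] by blast
    have xnn: "\<forall>l. x $ l \<ge> 0" "incidence ends *v x = lam" using xP by (auto simp: P_mem)
    have "x $ k = incidence ends $ u $ k * x $ k" using uw by (simp add: incidence_def)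
    also have "\<dots> \<le> (\<Sum>l\<in>UNIV. incidence ends $ u $ l * x $ l)"
      by (rule member_le_sum[where f="\<lambda>l. incidence ends $ u $ l * x $ l"])
         (use xnn in \<open>auto simp: incidence_def\<close>)
    also have "\<dots> = lam $ u" using xnn(2) by (auto simp: matrix_vector_mult_def vec_eq_iff)
    also have "\<dots> \<le> B" unfolding B_def
      by (rule member_le_sum[where f="\<lambda>i. lam $ i"]) (use lam_pos in \<open>auto simp: less_imp_le\<close>)
    finally show ?thesis .
  qed
  have "norm x \<le> real CARD('e) * B" if "x \<in> PP" for x
  proof -
    have "norm x \<le> (\<Sum>i\<in>UNIV. \<bar>x$i\<bar>)" by (rule norm_le_l1_cart)
    also have "\<dots> \<le> (\<Sum>i\<in>(UNIV::'e set). B)"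
      by (rule sum_mono) (use that xb in \<open>auto simp: P_mem\<close>)
    finally show ?thesis by simp
  qed
  then show ?thesis unfolding bounded_iff by blast
qed

lemma compact_Fk: "compact (Fk k)"
proof -
  have "closed PP" by (rule polyhedron_imp_closed[OF polyhedron_P])
  then have "closed (Fk k)" using face_of_imp_closed[OF convex_P _ Fk_face] by blast
  moreover have "bounded (Fk k)" using bounded_P by (rule bounded_subset) (auto simp: Fk_def)
  ultimately show ?thesis by (simp add: compact_eq_bounded_closed)
qed

end

theorem proposition5p13:
  fixes ends :: "'e::finite \<Rightarrow> 'v::finite set"
    and lam :: "real ^ 'v"
  assumes G: "simple_graph ends"
    and surj_only: "surjective_only ends UNIV"
    and lam_pos: "\<forall>i. lam $ i > 0"
    and stabilizable: "\<exists>\<mu> :: real ^ 'e. (\<forall>k. \<mu> $ k > 0) \<and> incidence ends *v \<mu> = lam"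
  defines "d \<equiv> int CARD('e) - int CARD('v)"
    and "P \<equiv> Pi_ge0 ends lam"
  shows "(\<forall>\<mu>. is_vertex P \<mu> \<longrightarrow>
            (bijective_vertex ends \<mu> \<longleftrightarrow>
              (int (card (facets_through P \<mu>)) = d \<and>
               (\<forall>k. \<mu> $ k = 0 \<longrightarrow> \<not> redundant ends lam k))))
       \<and> ((\<forall>\<mu>. is_vertex P \<mu> \<longrightarrow> bijective_vertex ends \<mu>) \<longleftrightarrow>
            (essential ends lam \<and> simple_polytope P d))"
proof -
  from stabilizable obtain p :: "real^'e" where p: "\<forall>k. p $ k > 0" "incidence ends *v p = lam" by blast
  interpret ctx ends lam p using G lam_pos p by unfold_locales auto
  have dimV: "dim (UNIV :: (real^'v) set) = CARD('v)" by simp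
  have first: "bijective_vertex ends \<mu> \<longleftrightarrow>
              (int (card (facets_through P \<mu>)) = d \<and>
               (\<forall>k. \<mu> $ k = 0 \<longrightarrow> \<not> redundant ends lam k))"
    if v: "is_vertex P \<mu>" for \<mu>
  proof -
    let ?S = "support \<mu>" and ?Z = "{k. \<mu> $ k = 0}"
    have mP: "\<mu> \<in> PP" using vertex_in[OF v] by (simp add: P_def)
    have nn: "\<forall>k. \<mu> $ k \<ge> 0" using mP by (simp add: P_mem)
    have ind: "independent (col ends ` ?S)" using vertex_indep[OF G] v by (simp add: P_def)
    have cc: "card (col ends ` ?S) = card ?S" by (rule card_image[OF inj_col[OF G]])
    have split: "card ?S + card ?Z = CARD('e)"
    proof -
      have "?S \<union> ?Z = UNIV" using nn by (auto simp: support_def) (metis less_eq_real_def)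
      moreover have "?S \<inter> ?Z = {}" by (auto simp: support_def)
      ultimately show ?thesis by (metis card_Un_disjoint finite)
    qed
    have dspan: "dim (span (col ends ` ?S)) = card (col ends ` ?S)"
      by (rule dim_span_eq_card_independent[OF ind])
    show ?thesis
    proof
      assume "bijective_vertex ends \<mu>"
      then have "bijective_graph ends ?S" by (simp add: bijective_vertex_def)
      then have sp: "span (col ends ` ?S) = UNIV" using span_good[OF G] bij_good[OF G] by blast
      then have cS: "card ?S = CARD('v)" using dspan cc dimV by simp
      have irr: "\<forall>k. \<mu> $ k = 0 \<longrightarrow> \<not> redundant ends lam k" using irred_span[OF mP sp] by blast
      have "card (facets_through P \<mu>) = card ?Z" using count_facets[OF mP irr] by (simp add: P_def)
      then have "int (card (facets_through P \<mu>)) = d" using split cS by (simp add: d_def)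
      then show "int (card (facets_through P \<mu>)) = d \<and> (\<forall>k. \<mu> $ k = 0 \<longrightarrow> \<not> redundant ends lam k)"
        using irr by blast
    next
      assume h: "int (card (facets_through P \<mu>)) = d \<and> (\<forall>k. \<mu> $ k = 0 \<longrightarrow> \<not> redundant ends lam k)"
      then have "card (facets_through P \<mu>) = card ?Z" using count_facets[OF mP] by (simp add: P_def)
      then have "card ?S = CARD('v)" using h split by (simp add: d_def)
      then have "dim (UNIV :: (real^'v) set) \<le> card (col ends ` ?S)" using cc dimV by simp
      then have "UNIV \<subseteq> span (col ends ` ?S)"
        using card_ge_dim_independent[of "col ends ` ?S" UNIV] ind by blast
      then have "span (col ends ` ?S) = UNIV" by blast
      then have "bijective_graph ends ?S" using indep_span_bij[OF G ind] by blast
      then show "bijective_vertex ends \<mu>" by (simp add: bijective_vertex_def)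
    qed
  qed
  have second: "(\<forall>\<mu>. is_vertex P \<mu> \<longrightarrow> bijective_vertex ends \<mu>) \<longleftrightarrow>
            (essential ends lam \<and> simple_polytope P d)"
  proof
    assume all: "\<forall>\<mu>. is_vertex P \<mu> \<longrightarrow> bijective_vertex ends \<mu>"
    have "\<not> redundant ends lam k" if t: "tight ends lam k" for k
    proof -
      from t obtain \<mu> where "\<mu> \<in> PP" "\<mu> $ k = 0" by (auto simp: tight_def)
      then have ne: "Fk k \<noteq> {}" by (auto simp: Fk_def)
      obtain \<nu> where "\<nu> extreme_point_of Fk k"
        using extreme_point_exists_convex[OF compact_Fk face_of_imp_convex[OF Fk_face] ne] by blast
      then have "{\<nu>} face_of Fk k" by (simp add: face_of_singleton)
      then have f: "{\<nu>} face_of PP" using Fk_face by (rule face_of_trans)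
      then have v: "is_vertex P \<nu>" by (simp add: is_vertex_def P_def)
      have "\<nu> \<in> Fk k" using f \<open>{\<nu>} face_of Fk k\<close> face_of_imp_subset by blast
      then have "\<nu> $ k = 0" by (simp add: Fk_def)
      moreover have "bijective_vertex ends \<nu>" using all v by blast
      ultimately show ?thesis using first[OF v] by blast
    qed
    then have "essential ends lam" by (simp add: essential_def)
    moreover have "simple_polytope P d"
      unfolding simple_polytope_def using all first by blast
    ultimately show "essential ends lam \<and> simple_polytope P d" by blast
  next
    assume h: "essential ends lam \<and> simple_polytope P d"
    show "\<forall>\<mu>. is_vertex P \<mu> \<longrightarrow> bijective_vertex ends \<mu>"
    proof (intro allI impI)
      fix \<mu> assume v: "is_vertex P \<mu>"
      have mP: "\<mu> \<in> PP" using vertex_in[OF v] by (simp add: P_def)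
      have "int (card (facets_through P \<mu>)) = d" using h v by (simp add: simple_polytope_def)
      moreover have "\<forall>k. \<mu> $ k = 0 \<longrightarrow> \<not> redundant ends lam k"
        using h mP by (auto simp: essential_def tight_def)
      ultimately show "bijective_vertex ends \<mu>" using first[OF v] by blast
    qed
  qed
  show ?thesis using first second by blast
qed

end
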